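(* Let $n\equiv 1\pmod 4$. Let $I_1,I_2\subseteq\{0,1,\dots,(n-1)/2\}$ be such that $\{2i,2i+1\}\cap\{j,n-j\}=\emptyset$ for all $i\in I_1$ and $j\in I_2$, and let $$D=\bigcup_{i\in I_1}\{2i,2i+1\}\cup\bigcup_{j\in I_2}\{j,n-j\}.$$ Then the hypercube $Q_n$ admits a $D$-magic labeling.
   Context: The hypercube $Q_n$ has vertex set $\mathbb{F}_2^n$, two vertices adjacent iff they differ in exactly one coordinate; $d(x,y)$ is the graph distance (the Hamming distance). For a set of distances $D$ and a vertex $x$ of a graph $G$, $N_D(x)=\{y\in V(G): d(x,y)\in D\}$. For a graph $G$ of order $N$, a $D$-magic labeling is a bijection $f:V(G)\to\{1,\dots,N\}$ for which there exists a constant $k$ with $\sum_{y\in N_D(x)}f(y)=k$ for every vertex $x$. *)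

theory Defs
  imports Main
begin

(* The hypercube Q_n: vertex set F_2^n, modelled as 0/1 vectors of length n,
   i.e. functions nat => bool that are False outside {0..<n}. *)
definition hypercube_vertices :: "nat \<Rightarrow> (nat \<Rightarrow> bool) set" where
  "hypercube_vertices n = {x. \<forall>i. n \<le> i \<longrightarrow> \<not> x i}"

(* Graph distance in Q_n = Hamming distance. *)
definition hamming_dist :: "nat \<Rightarrow> (nat \<Rightarrow> bool) \<Rightarrow> (nat \<Rightarrow> bool) \<Rightarrow> nat" where
  "hamming_dist n x y = card {i. i < n \<and> x i \<noteq> y i}"

definition dist_nbhd :: "nat \<Rightarrow> nat set \<Rightarrow> (nat \<Rightarrow> bool) \<Rightarrow> (nat \<Rightarrow> bool) set" where
  "dist_nbhd n D x = {y \<in> hypercube_vertices n. hamming_dist n x y \<in> D}"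

definition hypercube_D_magic :: "nat \<Rightarrow> nat set \<Rightarrow> ((nat \<Rightarrow> bool) \<Rightarrow> nat) \<Rightarrow> bool" where
  "hypercube_D_magic n D f \<longleftrightarrow>
     bij_betw f (hypercube_vertices n) {1..2^n} \<and>
     (\<exists>k. \<forall>x \<in> hypercube_vertices n. (\<Sum>y \<in> dist_nbhd n D x. f y) = k)"

end

theory Submission
  imports Defs
begin


definition bv :: "bool \<Rightarrow> nat" where "bv b = (if b then 1 else 0)"
definition xr :: "(nat \<Rightarrow> bool) \<Rightarrow> (nat \<Rightarrow> bool) \<Rightarrow> nat \<Rightarrow> bool" where
  "xr x y = (\<lambda>i. x i \<noteq> y i)"
definition flipS :: "nat set \<Rightarrow> (nat \<Rightarrow> bool) \<Rightarrow> nat \<Rightarrow> bool" where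
  "flipS S y = (\<lambda>i. if i \<in> S then \<not> y i else y i)"
definition cmp :: "nat \<Rightarrow> (nat \<Rightarrow> bool) \<Rightarrow> nat \<Rightarrow> bool" where
  "cmp n y = (\<lambda>i. i < n \<and> \<not> y i)"
definition ps :: "nat set \<Rightarrow> (nat \<Rightarrow> bool) \<Rightarrow> nat" where
  "ps W y = (\<Sum>i\<in>W. bv (y i)) mod 2"

lemma bv_le: "bv b \<le> 1" by (simp add: bv_def)
lemma bv_not: "bv (\<not> b) = 1 - bv b" by (simp add: bv_def)

lemma ham_sum: "hamming_dist n x y = (\<Sum>i<n. bv (x i \<noteq> y i))"
proof -
  have "(\<Sum>i<n. bv (x i \<noteq> y i)) = (\<Sum>i<n. of_bool (x i \<noteq> y i))"
    by (simp add: bv_def of_bool_def)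
  also have "\<dots> = card ({..<n} \<inter> {i. x i \<noteq> y i})" by simp
  also have "{..<n} \<inter> {i. x i \<noteq> y i} = {i. i < n \<and> x i \<noteq> y i}" by auto
  finally show ?thesis by (simp add: hamming_dist_def)
qed

lemma ham_le: "hamming_dist n x y \<le> n"
proof -
  have "{i. i < n \<and> x i \<noteq> y i} \<subseteq> {..<n}" by auto
  then show ?thesis unfolding hamming_dist_def using card_mono[of "{..<n}"] by fastforce
qed

lemma ps_le: "ps W y \<le> 1" by (simp add: ps_def)

lemma ps_flip:
  assumes "finite W" "a \<in> W" "S \<inter> W = {a}"
  shows "ps W (flipS S y) = 1 - ps W y"
proof -
  have e: "(\<Sum>i\<in>W - {a}. bv (flipS S y i)) = (\<Sum>i\<in>W - {a}. bv (y i))"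
    by (rule sum.cong) (use assms in \<open>auto simp: flipS_def\<close>)
  define R where "R = (\<Sum>i\<in>W - {a}. bv (y i))"
  have "(\<Sum>i\<in>W. bv (flipS S y i)) = bv (flipS S y a) + (\<Sum>i\<in>W - {a}. bv (flipS S y i))"
    using assms by (simp add: sum.remove)
  also have "\<dots> = bv (\<not> y a) + R" using assms e R_def by (auto simp: flipS_def)
  finally have 1: "(\<Sum>i\<in>W. bv (flipS S y i)) = bv (\<not> y a) + R" .
  have 2: "(\<Sum>i\<in>W. bv (y i)) = bv (y a) + R"
    using assms R_def by (simp add: sum.remove)
  show ?thesis unfolding ps_def 1 2
    by (cases "y a") (simp_all add: bv_def; presburger)+
qed

lemma ps_cmp:
  assumes "finite W" "W \<subseteq> {..<n}" "odd (card W)"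
  shows "ps W (cmp n y) = 1 - ps W y"
proof -
  have "(\<Sum>i\<in>W. bv (cmp n y i)) = (\<Sum>i\<in>W. 1 - bv (y i))"
    by (rule sum.cong) (use assms in \<open>auto simp: cmp_def bv_def\<close>)
  moreover have "(\<Sum>i\<in>W. 1 - bv (y i)) + (\<Sum>i\<in>W. bv (y i)) = card W"
    by (simp add: sum.distrib[symmetric] bv_def)
  ultimately have "(\<Sum>i\<in>W. bv (cmp n y i)) + (\<Sum>i\<in>W. bv (y i)) = card W" by simp
  then show ?thesis unfolding ps_def using assms(3) by presburger
qed

lemma ham_cmp:
  assumes "x \<in> hypercube_vertices n"
  shows "hamming_dist n x (cmp n y) = n - hamming_dist n x y"
proof -
  have "(\<Sum>i<n. bv (x i \<noteq> cmp n y i)) = (\<Sum>i<n. 1 - bv (x i \<noteq> y i))"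
    by (rule sum.cong) (auto simp: cmp_def bv_def)
  moreover have "(\<Sum>i<n. 1 - bv (x i \<noteq> y i)) + (\<Sum>i<n. bv (x i \<noteq> y i)) = n"
    by (simp add: sum.distrib[symmetric] bv_def)
  ultimately show ?thesis unfolding ham_sum by simp
qed

lemma cmp_V: "cmp n y \<in> hypercube_vertices n"
  by (simp add: cmp_def hypercube_vertices_def)

lemma cmp_cmp: "y \<in> hypercube_vertices n \<Longrightarrow> cmp n (cmp n y) = y"
  by (auto simp: cmp_def hypercube_vertices_def fun_eq_iff) (use leI in blast)

lemma flip_flip: "flipS S (flipS S y) = y" by (auto simp: flipS_def fun_eq_iff)

lemma flip_V: "y \<in> hypercube_vertices n \<Longrightarrow> S \<subseteq> {..<n} \<Longrightarrow> flipS S y \<in> hypercube_vertices n"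
  unfolding flipS_def hypercube_vertices_def by auto



definition tog :: "nat \<Rightarrow> nat" where "tog d = (if even d then d + 1 else d - 1)"

context
  fixes n :: nat and W :: "nat set" and wz :: nat and p :: "nat \<Rightarrow> nat" and Da Db :: "nat set"
  assumes Wsub: "W \<subseteq> {..<n}" and wzW: "wz \<in> W"
    and injp: "inj_on p (W - {wz})" and pim: "p ` (W - {wz}) \<subseteq> {..<n} - W"
    and ncard: "n + 1 = 2 * card W" and oddW: "odd (card W)"
    and Datog: "\<And>d. d \<in> Da \<Longrightarrow> tog d \<in> Da"
    and Dbc: "\<And>d. d \<in> Db \<Longrightarrow> d \<le> n \<Longrightarrow> n - d \<in> Db"
    and disj: "Da \<inter> Db = {}"
begin

lemma finW: "finite W" using Wsub finite_subset by blast

lemma pU_eq: "p ` (W - {wz}) = {..<n} - W"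
proof (rule card_subset_eq)
  show "finite ({..<n} - W)" by simp
  show "p ` (W - {wz}) \<subseteq> {..<n} - W" by (rule pim)
  have "card (p ` (W - {wz})) = card W - 1"
    using card_image[OF injp] finW wzW by simp
  moreover have "card ({..<n} - W) = n - card W"
    using Wsub finW by (simp add: card_Diff_subset)
  ultimately show "card (p ` (W - {wz})) = card ({..<n} - W)" using ncard by simp
qed

lemma decomp: "(\<Sum>i<n. g i) = (g wz :: nat) + (\<Sum>u\<in>W - {wz}. g u + g (p u))"
proof -
  have "{..<n} = W \<union> ({..<n} - W)" using Wsub by auto
  then have "(\<Sum>i<n. g i) = (\<Sum>i\<in>W. g i) + (\<Sum>i\<in>{..<n} - W. g i)"
    using finW by (metis Diff_disjoint finite_Diff finite_lessThan sum.union_disjoint)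
  also have "(\<Sum>i\<in>W. g i) = g wz + (\<Sum>i\<in>W - {wz}. g i)"
    using finW wzW by (simp add: sum.remove)
  also have "(\<Sum>i\<in>{..<n} - W. g i) = (\<Sum>u\<in>W - {wz}. g (p u))"
    unfolding pU_eq[symmetric] using sum.reindex[OF injp] by simp
  finally show ?thesis by (simp add: sum.distrib)
qed

definition mixed :: "(nat \<Rightarrow> bool) \<Rightarrow> (nat \<Rightarrow> bool) \<Rightarrow> nat \<Rightarrow> bool" where
  "mixed x y u = (xr x y u \<noteq> xr x y (p u))"

definition Sset :: "(nat \<Rightarrow> bool) \<Rightarrow> (nat \<Rightarrow> bool) \<Rightarrow> nat set" where
  "Sset x y = (if \<exists>u. u \<in> W - {wz} \<and> mixed x y u
     then {LEAST u. u \<in> W - {wz} \<and> mixed x y u, p (LEAST u. u \<in> W - {wz} \<and> mixed x y u)}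
     else {wz})"

definition tau :: "(nat \<Rightarrow> bool) \<Rightarrow> (nat \<Rightarrow> bool) \<Rightarrow> nat \<Rightarrow> bool" where
  "tau x y = flipS (Sset x y) y"

lemma mixed_flip:
  assumes "u \<in> S \<longleftrightarrow> p u \<in> S"
  shows "mixed x (flipS S y) u = mixed x y u"
  using assms by (auto simp: mixed_def xr_def flipS_def)

lemma Sset_props:
  "(\<forall>u \<in> W - {wz}. u \<in> Sset x y \<longleftrightarrow> p u \<in> Sset x y) \<and> Sset x y \<subseteq> {..<n} \<and> (\<exists>a. a \<in> W \<and> Sset x y \<inter> W = {a})"
proof (cases "\<exists>u. u \<in> W - {wz} \<and> mixed x y u")
  case True
  define a where "a = (LEAST u. u \<in> W - {wz} \<and> mixed x y u)"
  have a: "a \<in> W - {wz}" "mixed x y a" using LeastI_ex[OF True] a_def by auto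
  have S: "Sset x y = {a, p a}" unfolding Sset_def a_def by (rule if_P[OF True])
  have pa: "p a \<in> {..<n} - W" using pim a by auto
  have "\<forall>u \<in> W - {wz}. u \<in> Sset x y \<longleftrightarrow> p u \<in> Sset x y"
  proof
    fix u assume u: "u \<in> W - {wz}"
    have "p u \<in> {..<n} - W" using pim u by auto
    then show "u \<in> Sset x y \<longleftrightarrow> p u \<in> Sset x y"
      using S u a pa inj_onD[OF injp, of u a] by auto
  qed
  moreover have "Sset x y \<subseteq> {..<n}" using S a pa Wsub by auto
  moreover have "Sset x y \<inter> W = {a}" using S a pa by auto
  ultimately show ?thesis using a by blast
next
  case False
  have S: "Sset x y = {wz}" unfolding Sset_def by (rule if_not_P[OF False])
  show ?thesis using S wzW Wsub pim by auto
qed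

lemma Sset_tau: "Sset x (tau x y) = Sset x y"
proof -
  have P: "\<forall>u \<in> W - {wz}. u \<in> Sset x y \<longleftrightarrow> p u \<in> Sset x y" using Sset_props by (rule conjunct1)
  have "\<And>u. u \<in> W - {wz} \<Longrightarrow> mixed x (tau x y) u = mixed x y u"
    unfolding tau_def using P mixed_flip by simp
  then have "(\<lambda>u. u \<in> W - {wz} \<and> mixed x (tau x y) u) = (\<lambda>u. u \<in> W - {wz} \<and> mixed x y u)"
    by auto
  then show ?thesis unfolding Sset_def by (simp only:)
qed

lemma tau_tau: "tau x (tau x y) = y"
proof -
  have "tau x (tau x y) = flipS (Sset x y) (flipS (Sset x y) y)"
    unfolding tau_def[of x "tau x y"] Sset_tau by (simp add: tau_def)
  then show ?thesis by (simp add: flip_flip)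
qed

lemma tau_V: "y \<in> hypercube_vertices n \<Longrightarrow> tau x y \<in> hypercube_vertices n"
proof -
  assume y: "y \<in> hypercube_vertices n"
  have "Sset x y \<subseteq> {..<n}" using Sset_props[of x y] by (simp only:)
  then show ?thesis unfolding tau_def using flip_V[OF y] by simp
qed

lemma ps_tau: "ps W (tau x y) = 1 - ps W y"
proof -
  have "\<exists>a. a \<in> W \<and> Sset x y \<inter> W = {a}" using Sset_props[of x y] by (simp only:)
  then obtain a where "a \<in> W" "Sset x y \<inter> W = {a}" by blast
  then show ?thesis unfolding tau_def using ps_flip[OF finW] by simp
qed

lemma ham_tau: "hamming_dist n x (tau x y) = hamming_dist n x y \<or>
   hamming_dist n x (tau x y) = tog (hamming_dist n x y)"
proof (cases "\<exists>u. u \<in> W - {wz} \<and> mixed x y u")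
  case True
  define a where "a = (LEAST u. u \<in> W - {wz} \<and> mixed x y u)"
  have a: "a \<in> W - {wz}" "mixed x y a" using LeastI_ex[OF True] a_def by auto
  have S: "Sset x y = {a, p a}" unfolding Sset_def a_def by (rule if_P[OF True])
  have pa: "p a \<in> {..<n} - W" using pim a by auto
  have "\<And>u. u \<in> W - {wz} \<Longrightarrow> bv (x u \<noteq> tau x y u) + bv (x (p u) \<noteq> tau x y (p u))
        = bv (x u \<noteq> y u) + bv (x (p u) \<noteq> y (p u))"
  proof -
    fix u assume u: "u \<in> W - {wz}"
    have pu: "p u \<in> {..<n} - W" using pim u by auto
    show "bv (x u \<noteq> tau x y u) + bv (x (p u) \<noteq> tau x y (p u))
        = bv (x u \<noteq> y u) + bv (x (p u) \<noteq> y (p u))"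
    proof (cases "u = a")
      case True
      then show ?thesis using a pa S by (auto simp: tau_def flipS_def bv_def mixed_def xr_def)
    next
      case False
      then have "p u \<noteq> p a" using inj_onD[OF injp, of u a] u a by auto
      then show ?thesis using False a pa pu u S by (auto simp: tau_def flipS_def)
    qed
  qed
  moreover have "tau x y wz = y wz" using S a pa wzW by (auto simp: tau_def flipS_def)
  ultimately have "hamming_dist n x (tau x y) = hamming_dist n x y"
    unfolding ham_sum decomp by simp
  then show ?thesis by simp
next
  case False
  have S: "Sset x y = {wz}" unfolding Sset_def by (rule if_not_P[OF False])
  have eq: "\<And>u. u \<in> W - {wz} \<Longrightarrow> bv (x u \<noteq> tau x y u) + bv (x (p u) \<noteq> tau x y (p u))
        = 2 * bv (x u \<noteq> y u)"
  proof -
    fix u assume u: "u \<in> W - {wz}"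
    have pu: "p u \<in> {..<n} - W" using pim u by auto
    have "\<not> mixed x y u" using False u by auto
    then show "bv (x u \<noteq> tau x y u) + bv (x (p u) \<noteq> tau x y (p u)) = 2 * bv (x u \<noteq> y u)"
      using S u pu wzW by (auto simp: tau_def flipS_def mixed_def xr_def)
  qed
  have eq2: "\<And>u. u \<in> W - {wz} \<Longrightarrow> bv (x u \<noteq> y u) + bv (x (p u) \<noteq> y (p u))
        = 2 * bv (x u \<noteq> y u)"
  proof -
    fix u assume u: "u \<in> W - {wz}"
    have "\<not> mixed x y u" using False u by auto
    then show "bv (x u \<noteq> y u) + bv (x (p u) \<noteq> y (p u)) = 2 * bv (x u \<noteq> y u)"
      by (auto simp: mixed_def xr_def)
  qed
  define R where "R = (\<Sum>u\<in>W - {wz}. bv (x u \<noteq> y u))"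
  have h1: "hamming_dist n x (tau x y) = bv (x wz \<noteq> tau x y wz) + 2 * R"
    unfolding ham_sum decomp R_def using eq by (simp add: sum_distrib_left)
  have h2: "hamming_dist n x y = bv (x wz \<noteq> y wz) + 2 * R"
  proof -
    have "(\<Sum>u\<in>W - {wz}. bv (x u \<noteq> y u) + bv (x (p u) \<noteq> y (p u))) = (\<Sum>u\<in>W - {wz}. 2 * bv (x u \<noteq> y u))"
      by (rule sum.cong[OF refl eq2])
    then show ?thesis unfolding ham_sum decomp R_def by (simp add: sum_distrib_left)
  qed
  have "tau x y wz = (\<not> y wz)" using S by (simp add: tau_def flipS_def)
  then have "hamming_dist n x (tau x y) = tog (hamming_dist n x y)"
    unfolding h1 h2 tog_def by (cases "x wz \<noteq> y wz") (auto simp: bv_def)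
  then show ?thesis by simp
qed

definition sig :: "(nat \<Rightarrow> bool) \<Rightarrow> (nat \<Rightarrow> bool) \<Rightarrow> nat \<Rightarrow> bool" where
  "sig x y = (if hamming_dist n x y \<in> Db then cmp n y else tau x y)"

lemma balance:
  assumes x: "x \<in> hypercube_vertices n"
  shows "card {y \<in> dist_nbhd n (Da \<union> Db) x. ps W y = 1} = card {y \<in> dist_nbhd n (Da \<union> Db) x. ps W y = 0}"
proof -
  let ?N = "dist_nbhd n (Da \<union> Db) x"
  have key: "sig x y \<in> ?N \<and> sig x (sig x y) = y \<and> ps W (sig x y) = 1 - ps W y" if y: "y \<in> ?N" for y
  proof (cases "hamming_dist n x y \<in> Db")
    case True
    have yV: "y \<in> hypercube_vertices n" using y by (simp add: dist_nbhd_def)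
    have h: "hamming_dist n x (cmp n y) = n - hamming_dist n x y" using ham_cmp[OF x] .
    have hD: "hamming_dist n x (cmp n y) \<in> Db" using h Dbc[OF True ham_le] by simp
    have h2: "hamming_dist n x (cmp n y) \<le> n" by (rule ham_le)
    show ?thesis using True hD cmp_V cmp_cmp[OF yV] ps_cmp[OF finW Wsub oddW]
      by (simp add: sig_def dist_nbhd_def)
  next
    case False
    have yV: "y \<in> hypercube_vertices n" using y by (simp add: dist_nbhd_def)
    have Day: "hamming_dist n x y \<in> Da" using False y by (simp add: dist_nbhd_def)
    have "hamming_dist n x (tau x y) \<in> Da" using ham_tau Datog[OF Day] Day by metis
    then have nDb: "hamming_dist n x (tau x y) \<notin> Db" using disj by blast
    show ?thesis using False nDb \<open>hamming_dist n x (tau x y) \<in> Da\<close> tau_V[OF yV] tau_tau ps_tau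
      by (simp add: sig_def dist_nbhd_def)
  qed
  have "bij_betw (sig x) {y \<in> ?N. ps W y = 1} {y \<in> ?N. ps W y = 0}"
    by (rule bij_betw_byWitness[where f'="sig x"]) (use key in auto)
  then show ?thesis by (rule bij_betw_same_card)
qed

end



lemma pow2sum: "(\<Sum>k<n. (2::nat)^k) + 1 = 2^n"
  by (induction n) auto

lemma binary_inj:
  "(\<forall>k<n. a k \<le> (1::nat) \<and> b k \<le> 1) \<Longrightarrow> (\<Sum>k<n. 2^k * a k) = (\<Sum>k<n. 2^k * b k) \<Longrightarrow> \<forall>k<n. a k = b k"
proof (induction n arbitrary: a b)
  case 0 then show ?case by simp
next
  case (Suc n)
  have e: "a 0 + 2 * (\<Sum>k<n. 2^k * a (Suc k)) = b 0 + 2 * (\<Sum>k<n. 2^k * b (Suc k))"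
    using Suc.prems(2) unfolding sum.lessThan_Suc_shift by (simp add: sum_distrib_left mult.assoc)
  have a0: "a 0 \<le> 1" "b 0 \<le> 1" using Suc.prems(1) by auto
  have 0: "a 0 = b 0" using e a0 by presburger
  then have "(\<Sum>k<n. 2^k * a (Suc k)) = (\<Sum>k<n. 2^k * b (Suc k))" using e by simp
  moreover have "\<forall>k<n. a (Suc k) \<le> 1 \<and> b (Suc k) \<le> 1" using Suc.prems(1) by auto
  ultimately have "\<forall>k<n. a (Suc k) = b (Suc k)" using Suc.IH[of "\<lambda>k. a (Suc k)" "\<lambda>k. b (Suc k)"] by blast
  then show ?case using 0 by (auto simp: less_Suc_eq_0_disj)
qed

lemma finV_card: "finite (hypercube_vertices n) \<and> card (hypercube_vertices n) = 2^n"
proof -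
  have "bij_betw (\<lambda>y. {i. y i}) (hypercube_vertices n) (Pow {..<n})"
    apply (rule bij_betw_byWitness[where f'="\<lambda>S i. i \<in> S"])
    apply (auto simp: hypercube_vertices_def)
    using leI by blast
  then have "card (hypercube_vertices n) = 2^n" "finite (hypercube_vertices n)"
    using bij_betw_same_card bij_betw_finite by (force simp: card_Pow)+
  then show ?thesis by simp
qed

lemma sum_mod_shift: "finite T \<Longrightarrow> (\<Sum>j\<in>T. (a j + P) mod 2) mod 2 = ((\<Sum>j\<in>T. a j) + card T * P) mod (2::nat)"
  by (simp add: mod_sum_eq sum.distrib)

lemma xr_xr: "xr x (xr x y) = y" by (auto simp: xr_def fun_eq_iff)

lemma translate:
  assumes x: "x \<in> hypercube_vertices n"
  shows "card (dist_nbhd n D x) = card (dist_nbhd n D (\<lambda>_. False))"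
proof -
  have h: "hamming_dist n (\<lambda>_. False) (xr x y) = hamming_dist n x y" for y
    by (simp add: hamming_dist_def xr_def)
  have v: "y \<in> hypercube_vertices n \<Longrightarrow> xr x y \<in> hypercube_vertices n" for y
    using x by (simp add: hypercube_vertices_def xr_def)
  have "bij_betw (xr x) (dist_nbhd n D x) (dist_nbhd n D (\<lambda>_. False))"
    by (rule bij_betw_byWitness[where f'="xr x"]) (auto simp: dist_nbhd_def v xr_xr h[symmetric])
  then show ?thesis by (rule bij_betw_same_card)
qed



definition Aset :: "nat \<Rightarrow> nat set" where "Aset h = {..<h}"
definition Bset :: "nat \<Rightarrow> nat set" where "Bset h = {h<..<2*h+1}"
definition Wk :: "nat \<Rightarrow> nat \<Rightarrow> nat set" where
  "Wk h k = (if k \<le> h then insert k (Bset h) else insert k (Aset h))"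
definition pk :: "nat \<Rightarrow> nat \<Rightarrow> nat \<Rightarrow> nat" where
  "pk h k u = (if k \<le> h then (if u - (h+1) = k then h else u - (h+1))
               else (if u + (h+1) = k then h else u + (h+1)))"
definition cb :: "nat \<Rightarrow> nat \<Rightarrow> (nat \<Rightarrow> bool) \<Rightarrow> nat" where
  "cb h k y = ps (Wk h k) y"
definition lab :: "nat \<Rightarrow> (nat \<Rightarrow> bool) \<Rightarrow> nat" where
  "lab h y = 1 + (\<Sum>k<2*h+1. 2^k * cb h k y)"

lemma W_conds:
  assumes "k < 2*h+1" "even h"
  shows "Wk h k \<subseteq> {..<2*h+1}" "k \<in> Wk h k" "inj_on (pk h k) (Wk h k - {k})"
    "pk h k ` (Wk h k - {k}) \<subseteq> {..<2*h+1} - Wk h k"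
    "2*h+1 + 1 = 2 * card (Wk h k)" "odd (card (Wk h k))"
proof -
  show "Wk h k \<subseteq> {..<2*h+1}" using assms by (auto simp: Wk_def Aset_def Bset_def)
  show "k \<in> Wk h k" by (simp add: Wk_def)
  show "inj_on (pk h k) (Wk h k - {k})"
    by (auto simp: inj_on_def Wk_def Aset_def Bset_def pk_def split: if_splits)
  show "pk h k ` (Wk h k - {k}) \<subseteq> {..<2*h+1} - Wk h k"
    using assms by (auto simp: Wk_def Aset_def Bset_def pk_def split: if_splits)
  have "card (Wk h k) = h + 1" by (auto simp: Wk_def Aset_def Bset_def)
  then show "2*h+1 + 1 = 2 * card (Wk h k)" "odd (card (Wk h k))" using assms by auto
qed

lemma cb_low: "k \<le> h \<Longrightarrow> cb h k y = (bv (y k) + (\<Sum>j\<in>Bset h. bv (y j))) mod 2"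
  by (simp add: cb_def ps_def Wk_def Bset_def)

lemma cb_high: "h < k \<Longrightarrow> cb h k y = (bv (y k) + (\<Sum>j\<in>Aset h. bv (y j))) mod 2"
  by (simp add: cb_def ps_def Wk_def Aset_def)

lemma recover:
  assumes "even h"
  shows "bv (y k) = (cb h k y + (\<Sum>j\<in>(if k \<le> h then Bset h else Aset h). cb h j y)) mod 2"
proof (cases "k \<le> h")
  case True
  define P where "P = (\<Sum>j\<in>Aset h. bv (y j))"
  define Q where "Q = (\<Sum>j\<in>Bset h. bv (y j))"
  have "(\<Sum>j\<in>Bset h. cb h j y) = (\<Sum>j\<in>Bset h. (bv (y j) + P) mod 2)"
    by (rule sum.cong) (auto simp: cb_high Bset_def P_def)
  then have s: "(\<Sum>j\<in>Bset h. cb h j y) mod 2 = (Q + h * P) mod 2"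
    using sum_mod_shift[of "Bset h" "\<lambda>j. bv (y j)" P] by (simp add: Q_def Bset_def)
  have e: "even (h * P)" using assms by simp
  then obtain t where t: "h * P = 2 * t" by blast
  have s': "(\<Sum>j\<in>Bset h. cb h j y) mod 2 = Q mod 2" using s t by simp
  have b: "bv (y k) \<le> 1" by (rule bv_le)
  
  have "((bv (y k) + Q) mod 2 + (\<Sum>j\<in>Bset h. cb h j y)) mod 2 = bv (y k)"
    using s' b by (simp add: mod_simps) presburger
  then show ?thesis using True cb_low[OF True, of y] unfolding Q_def[symmetric] by simp
next
  case False
  define P where "P = (\<Sum>j\<in>Aset h. bv (y j))"
  define Q where "Q = (\<Sum>j\<in>Bset h. bv (y j))"
  have "(\<Sum>j\<in>Aset h. cb h j y) = (\<Sum>j\<in>Aset h. (bv (y j) + Q) mod 2)"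
    by (rule sum.cong) (auto simp: cb_low Aset_def Q_def)
  then have s: "(\<Sum>j\<in>Aset h. cb h j y) mod 2 = (P + h * Q) mod 2"
    using sum_mod_shift[of "Aset h" "\<lambda>j. bv (y j)" Q] by (simp add: P_def Aset_def)
  have e: "even (h * Q)" using assms by simp
  then obtain t where t: "h * Q = 2 * t" by blast
  have s': "(\<Sum>j\<in>Aset h. cb h j y) mod 2 = P mod 2" using s t by simp
  have b: "bv (y k) \<le> 1" by (rule bv_le)
  have F: "h < k" using False by simp
  have "((bv (y k) + P) mod 2 + (\<Sum>j\<in>Aset h. cb h j y)) mod 2 = bv (y k)"
    using s' b by (simp add: mod_simps) presburger
  then show ?thesis using False cb_high[OF F, of y] unfolding P_def[symmetric] by simp
qed

lemma cb_le: "cb h k y \<le> 1" unfolding cb_def by (rule ps_le)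

lemma lab_inj:
  assumes "even h"
  shows "inj_on (lab h) (hypercube_vertices (2*h+1))"
proof (rule inj_onI)
  fix y y' assume y: "y \<in> hypercube_vertices (2*h+1)" and y': "y' \<in> hypercube_vertices (2*h+1)"
    and eq: "lab h y = lab h y'"
  have "\<forall>k<2*h+1. cb h k y = cb h k y'"
    by (rule binary_inj) (use eq cb_le in \<open>auto simp: lab_def\<close>)
  then have c: "\<And>j. j \<in> Aset h \<union> Bset h \<union> {..<2*h+1} \<Longrightarrow> cb h j y = cb h j y'"
    by (auto simp: Aset_def Bset_def)
  show "y = y'"
  proof
    fix k
    show "y k = y' k"
    proof (cases "k < 2*h+1")
      case True
      have "(\<Sum>j\<in>(if k \<le> h then Bset h else Aset h). cb h j y) = (\<Sum>j\<in>(if k \<le> h then Bset h else Aset h). cb h j y')"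
        by (rule sum.cong) (auto intro: c split: if_splits)
      then have "bv (y k) = bv (y' k)" using recover[OF assms, of y k] recover[OF assms, of y' k] c[of k] True
        by simp
      then show ?thesis by (auto simp: bv_def split: if_splits)
    next
      case False
      then show ?thesis using y y' by (simp add: hypercube_vertices_def)
    qed
  qed
qed

lemma lab_bij:
  assumes "even h"
  shows "bij_betw (lab h) (hypercube_vertices (2*h+1)) {1..2^(2*h+1)}"
proof -
  let ?V = "hypercube_vertices (2*h+1)"
  have sub: "lab h ` ?V \<subseteq> {1..2^(2*h+1)}"
  proof
    fix z assume "z \<in> lab h ` ?V"
    then obtain y where z: "z = lab h y" by auto
    have "(\<Sum>k<2*h+1. 2^k * cb h k y) \<le> (\<Sum>k<2*h+1. 2^k)"
      by (rule sum_mono) (metis cb_le mult.right_neutral mult_le_mono2)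
    then show "z \<in> {1..2^(2*h+1)}" using pow2sum[of "2*h+1"] z by (simp add: lab_def)
  qed
  have "card (lab h ` ?V) = 2^(2*h+1)"
    using card_image[OF lab_inj[OF assms]] finV_card by simp
  then have "lab h ` ?V = {1..2^(2*h+1)}"
    using card_subset_eq[OF _ sub] by simp
  then show ?thesis using lab_inj[OF assms] by (simp add: bij_betw_def)
qed



lemma half_count:
  assumes fin: "finite N" and le: "\<And>y. c y \<le> (1::nat)"
    and bal: "card {y \<in> N. c y = 1} = card {y \<in> N. c y = 0}"
  shows "2 * (\<Sum>y\<in>N. c y) = card N"
proof -
  let ?S1 = "{y \<in> N. c y = 1}" and ?S0 = "{y \<in> N. c y = 0}"
  have c01: "c y = 0 \<or> c y = 1" for y using le[of y] by linarith
  have N: "N = ?S1 \<union> ?S0"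
  proof (rule set_eqI)
    fix y show "y \<in> N \<longleftrightarrow> y \<in> ?S1 \<union> ?S0" using c01[of y] by auto
  qed
  have d: "?S1 \<inter> ?S0 = {}" by auto
  have "card N = card ?S1 + card ?S0"
    using card_Un_disjoint[of ?S1 ?S0] fin d N by simp
  moreover have "(\<Sum>y\<in>N. c y) = (\<Sum>y\<in>?S1. c y) + (\<Sum>y\<in>?S0. c y)"
    using sum.union_disjoint[of ?S1 ?S0 c] fin d N by simp
  moreover have "(\<Sum>y\<in>?S1. c y) = card ?S1" by simp
  moreover have "(\<Sum>y\<in>?S0. c y) = 0" by simp
  ultimately show ?thesis using bal by simp
qed

theorem theorem3p9:
  fixes n :: nat and I1 I2 D :: "nat set"
  assumes "n mod 4 = 1"
    and "I1 \<subseteq> {0..(n - 1) div 2}"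
    and "I2 \<subseteq> {0..(n - 1) div 2}"
    and "\<forall>i \<in> I1. \<forall>j \<in> I2. {2*i, 2*i+1} \<inter> {j, n - j} = {}"
    and "D = (\<Union>i \<in> I1. {2*i, 2*i+1}) \<union> (\<Union>j \<in> I2. {j, n - j})"
  shows "\<exists>f. hypercube_D_magic n D f"
proof -
  define h where "h = (n - 1) div 2"
  have nh: "n = 2*h+1" and eh: "even h" using assms(1) unfolding h_def by presburger+
  define D1 where "D1 = (\<Union>i \<in> I1. {2*i, 2*i+1})"
  define D2 where "D2 = (\<Union>j \<in> I2. {j, n - j})"
  have DD: "D = D1 \<union> D2" using assms(5) D1_def D2_def by simp
  have D1tog: "tog d \<in> D1" if "d \<in> D1" for d
    using that unfolding D1_def tog_def by auto
  have D2c: "n - d \<in> D2" if d2: "d \<in> D2" and "d \<le> n" for d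
  proof -
    obtain j where j: "j \<in> I2" "d = j \<or> d = n - j" using d2 unfolding D2_def by blast
    have "j \<le> n" using j(1) assms(3) by auto
    then show ?thesis using j unfolding D2_def by auto
  qed
  have disj: "D1 \<inter> D2 = {}" using assms(4) unfolding D1_def D2_def by blast
  let ?V = "hypercube_vertices n"
  let ?N = "\<lambda>x. dist_nbhd n D x"
  have finN: "finite (?N x)" for x
    using finV_card[of n] by (rule conjE) (auto intro: finite_subset simp: dist_nbhd_def)
  have half: "2 * (\<Sum>y\<in>?N x. cb h k y) = card (?N x)" if x: "x \<in> ?V" and k: "k < n" for x k
  proof -
    note wc = W_conds[of k h, folded nh, OF k eh]
    have bal: "card {y \<in> ?N x. ps (Wk h k) y = 1} = card {y \<in> ?N x. ps (Wk h k) y = 0}"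
      unfolding DD
      by (rule balance[where n=n and W="Wk h k" and wz=k and p="pk h k" and Da=D1 and Db=D2, OF wc(1) wc(2) wc(3) wc(4) wc(5) wc(6) D1tog D2c disj x])
    show ?thesis unfolding cb_def by (rule half_count[OF finN ps_le bal])
  qed
  have twice: "2 * (\<Sum>y\<in>?N x. lab h y) = card (?N x) * (2^n + 1)" if x: "x \<in> ?V" for x
  proof -
    have L: "lab h y = 1 + (\<Sum>k<n. 2^k * cb h k y)" for y by (simp add: lab_def nh)
    have "(\<Sum>y\<in>?N x. lab h y) = (\<Sum>y\<in>?N x. 1 + (\<Sum>k<n. 2^k * cb h k y))"
      by (simp only: L)
    also have "\<dots> = card (?N x) + (\<Sum>y\<in>?N x. \<Sum>k<n. 2^k * cb h k y)"
      by (subst sum.distrib) simp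
    also have "(\<Sum>y\<in>?N x. \<Sum>k<n. 2^k * cb h k y) = (\<Sum>k<n. \<Sum>y\<in>?N x. 2^k * cb h k y)"
      by (rule sum.swap)
    also have "\<dots> = (\<Sum>k<n. 2^k * (\<Sum>y\<in>?N x. cb h k y))"
      by (simp add: sum_distrib_left)
    finally have "(\<Sum>y\<in>?N x. lab h y) = card (?N x) + (\<Sum>k<n. 2^k * (\<Sum>y\<in>?N x. cb h k y))" .
    then have "2 * (\<Sum>y\<in>?N x. lab h y) = 2 * card (?N x) + (\<Sum>k<n. 2^k * (2 * (\<Sum>y\<in>?N x. cb h k y)))"
      by (simp add: sum_distrib_left algebra_simps)
    also have "(\<Sum>k<n. 2^k * (2 * (\<Sum>y\<in>?N x. cb h k y))) = (\<Sum>k<n. 2^k * card (?N x))"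
      by (rule sum.cong) (use half[OF x] in auto)
    also have "\<dots> = (\<Sum>k<n. 2^k) * card (?N x)" by (simp add: sum_distrib_right)
    finally have "2 * (\<Sum>y\<in>?N x. lab h y) = 2 * card (?N x) + (\<Sum>k<n. 2^k) * card (?N x)" .
    moreover have e: "(2::nat)^n + 1 = (\<Sum>k<n. 2^k) + 2" using pow2sum[of n] by simp
    ultimately show ?thesis unfolding e by (simp add: algebra_simps)
  qed
  have z: "(\<lambda>_. False) \<in> ?V" by (simp add: hypercube_vertices_def)
  have magic: "(\<Sum>y\<in>?N x. lab h y) = (\<Sum>y\<in>?N (\<lambda>_. False). lab h y)" if x: "x \<in> ?V" for x
    using twice[OF x] twice[OF z] translate[OF x, of D] by simp
  have "hypercube_D_magic n D (lab h)"
    unfolding hypercube_D_magic_def using lab_bij[OF eh, folded nh] magic by blast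
  then show ?thesis by blast
qed

end
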